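(* Let $n\ge 5$ and $k\ge 1$, and let $\mathcal{G}^4_n$ be the graph on $\{1,\dots,n\}$ in which each node $i$ is adjacent to $i\pm1$ and $i\pm 2 \pmod n$. Then $$M^{\mathcal{G}^4_n}_{k,n}\le M^C_{k,\lfloor n/2\rfloor}+M^C_{k,\lceil n/2\rceil}+2 .$$ In particular, $M^{\mathcal{G}^4_n}_{k,n}=O(2k\log(n/(2k)))+2$.
   Context: Let $G=(V,E)$ be a simple undirected graph with $V=\{1,\dots,n\}$. A measurement matrix for $G$ is a matrix $A\in\{0,1\}^{m\times n}$ in which every nonzero row has a support that induces a connected subgraph of $G$. A vector $x\in\mathbb{R}^n$ is $k$-sparse if it has at most $k$ nonzero entries. $A$ identifies all $k$-sparse vectors if $Ax_1\ne Ax_2$ for every two distinct $k$-sparse vectors $x_1,x_2$. $M^G_{k,n}$ is the minimum number of rows of a measurement matrix for $G$ that identifies all $k$-sparse vectors. $M^C_{k,N}$ is the minimum number of rows of an arbitrary matrix in $\{0,1\}^{m\times N}$ that identifies all $k$-sparse vectors in $\mathbb{R}^N$; equivalently, it is $M^{K_N}_{k,N}$ for the complete graph $K_N$. It is known that $M^C_{k,N}=O(k\log(N/k))$. *)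

theory Defs
  imports Complex_Main
begin

text \<open>Graphs on vertex set {1..n} are given by an edge predicate E.
  A matrix with m rows and n columns is a function A :: nat => nat => real,
  with row indices i < m and column indices j in {1..n}.
  Vectors in R^n are functions x :: nat => real, vanishing outside {1..n}.\<close>

definition zero_one_matrix :: "nat \<Rightarrow> nat \<Rightarrow> (nat \<Rightarrow> nat \<Rightarrow> real) \<Rightarrow> bool" where
  "zero_one_matrix m n A \<longleftrightarrow> (\<forall>i<m. \<forall>j\<in>{1..n}. A i j = 0 \<or> A i j = 1)"

definition row_support :: "nat \<Rightarrow> (nat \<Rightarrow> nat \<Rightarrow> real) \<Rightarrow> nat \<Rightarrow> nat set" where
  "row_support n A i = {j \<in> {1..n}. A i j \<noteq> 0}"

definition induces_connected :: "(nat \<Rightarrow> nat \<Rightarrow> bool) \<Rightarrow> nat set \<Rightarrow> bool" where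
  "induces_connected E S \<longleftrightarrow>
     (\<forall>u\<in>S. \<forall>v\<in>S. (\<lambda>a b. a \<in> S \<and> b \<in> S \<and> E a b)\<^sup>*\<^sup>* u v)"

definition measurement_matrix ::
  "(nat \<Rightarrow> nat \<Rightarrow> bool) \<Rightarrow> nat \<Rightarrow> nat \<Rightarrow> (nat \<Rightarrow> nat \<Rightarrow> real) \<Rightarrow> bool" where
  "measurement_matrix E m n A \<longleftrightarrow> zero_one_matrix m n A \<and>
     (\<forall>i<m. row_support n A i \<noteq> {} \<longrightarrow> induces_connected E (row_support n A i))"

definition sparse_vec :: "nat \<Rightarrow> nat \<Rightarrow> (nat \<Rightarrow> real) \<Rightarrow> bool" where
  "sparse_vec k n x \<longleftrightarrow> (\<forall>j. j \<notin> {1..n} \<longrightarrow> x j = 0) \<and> card {j\<in>{1..n}. x j \<noteq> 0} \<le> k"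

definition mat_vec :: "nat \<Rightarrow> (nat \<Rightarrow> nat \<Rightarrow> real) \<Rightarrow> (nat \<Rightarrow> real) \<Rightarrow> nat \<Rightarrow> real" where
  "mat_vec n A x i = (\<Sum>j=1..n. A i j * x j)"

definition identifies :: "nat \<Rightarrow> nat \<Rightarrow> nat \<Rightarrow> (nat \<Rightarrow> nat \<Rightarrow> real) \<Rightarrow> bool" where
  "identifies k m n A \<longleftrightarrow>
     (\<forall>x1 x2. sparse_vec k n x1 \<longrightarrow> sparse_vec k n x2 \<longrightarrow> x1 \<noteq> x2 \<longrightarrow>
        (\<exists>i<m. mat_vec n A x1 i \<noteq> mat_vec n A x2 i))"

definition M_graph :: "(nat \<Rightarrow> nat \<Rightarrow> bool) \<Rightarrow> nat \<Rightarrow> nat \<Rightarrow> nat" where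
  "M_graph E k n = (LEAST m. \<exists>A. measurement_matrix E m n A \<and> identifies k m n A)"

text \<open>M^C_{k,N}: arbitrary 0/1 matrices (equivalently, the complete graph).\<close>
definition M_C :: "nat \<Rightarrow> nat \<Rightarrow> nat" where
  "M_C k N = (LEAST m. \<exists>A. zero_one_matrix m N A \<and> identifies k m N A)"

definition G4 :: "nat \<Rightarrow> nat \<Rightarrow> nat \<Rightarrow> bool" where
  "G4 n i j \<longleftrightarrow> i \<in> {1..n} \<and> j \<in> {1..n} \<and> i \<noteq> j \<and>
     (int i - int j) mod int n \<in> {1, 2, int n - 1, int n - 2}"

end

theory Submission
  imports Defs
begin

lemma neg_mod_int: "0 < r \<Longrightarrow> r < (N::int) \<Longrightarrow> (- r) mod N = N - r"
  by (simp add: zmod_zminus1_eq_if)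

lemma G4_edge1:
  assumes "n \<ge> 5" "a \<ge> 1" "a + 1 \<le> n"
  shows "G4 n a (a+1)" "G4 n (a+1) a"
proof -
  have d1: "int a - int (a+1) = - 1" "int (a+1) - int a = 1" by simp_all
  have m1: "(- 1) mod int n = int n - 1" using neg_mod_int[of 1 "int n"] assms by simp
  have p1: "1 mod int n = 1" using assms by simp
  show "G4 n a (a+1)" "G4 n (a+1) a" unfolding G4_def d1 m1 p1 using assms by simp_all
qed

lemma G4_edge2:
  assumes "n \<ge> 5" "a \<ge> 1" "a + 2 \<le> n"
  shows "G4 n a (a+2)" "G4 n (a+2) a"
proof -
  have d1: "int a - int (a+2) = - 2" "int (a+2) - int a = 2" by simp_all
  have m1: "(- 2) mod int n = int n - 2" using neg_mod_int[of 2 "int n"] assms by simp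
  have p1: "2 mod int n = 2" using assms by simp
  show "G4 n a (a+2)" "G4 n (a+2) a" unfolding G4_def d1 m1 p1 using assms by simp_all
qed

lemma G4_sym: assumes n5: "n \<ge> 5" shows "G4 n a c \<Longrightarrow> G4 n c a"
proof -
  assume h: "G4 n a c"
  define r where "r = (int a - int c) mod int n"
  have r: "r \<in> {1, 2, int n - 1, int n - 2}" using h unfolding G4_def r_def by auto
  have "(int c - int a) mod int n = (- (int a - int c)) mod int n" by simp
  also have "\<dots> = (- r) mod int n" unfolding r_def by (simp add: mod_minus_eq)
  also have "\<dots> = int n - r" using r n5 by (intro neg_mod_int) auto
  finally have "(int c - int a) mod int n \<in> {1, 2, int n - 1, int n - 2}" using r by auto
  with h show ?thesis by (auto simp: G4_def)
qed

lemma conn: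
  assumes n5: "n \<ge> 5" and b: "b \<in> {1,2::nat}" and sub: "S \<subseteq> {1..n}"
    and sup: "\<forall>j\<in>{1..n}. j mod 2 = b mod 2 \<longrightarrow> j \<in> S"
  shows "induces_connected (G4 n) S"
proof -
  define R where "R = (\<lambda>a c. a \<in> S \<and> c \<in> S \<and> G4 n a c)"
  have symR: "R a c \<Longrightarrow> R c a" for a c unfolding R_def using G4_sym[OF n5] by blast
  have symRR: "R\<^sup>*\<^sup>* a c \<Longrightarrow> R\<^sup>*\<^sup>* c a" for a c
  proof (induction rule: rtranclp_induct)
    case base then show ?case by simp
  next
    case (step y z) then show ?case using symR
      by (meson converse_rtranclp_into_rtranclp)
  qed
  have chain: "b + 2*t \<le> n \<Longrightarrow> R\<^sup>*\<^sup>* b (b+2*t)" for t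
  proof (induction t)
    case 0 then show ?case by simp
  next
    case (Suc t)
    have "R (b+2*t) (b+2*t+2)" unfolding R_def using Suc.prems b n5 sup
      G4_edge2[of n "b+2*t"] by auto
    with Suc show ?case by (auto intro: rtranclp.rtrancl_into_rtrancl)
  qed
  have reach: "R\<^sup>*\<^sup>* b v" if v: "v \<in> S" for v
  proof (cases "v mod 2 = b mod 2")
    case True
    have "v \<ge> 1" using v sub by auto
    then have "v \<ge> b" using True b by (cases "v = 1") auto
    then have "2 dvd v - b" using True mod_eq_dvd_iff_nat by blast
    then obtain t where "v - b = 2 * t" by (elim dvdE)
    then have t: "v = b + 2 * t" using \<open>v \<ge> b\<close> by simp
    then show ?thesis using chain[of t] v sub by auto
  next
    case False
    show ?thesis
    proof (cases "v = 1")
      case True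
      then have b2: "b = 2" using False b by auto
      have "2 \<in> S" using sup n5 b2 by auto
      moreover have "1 \<in> S" using v True by simp
      moreover have "G4 n (1+1) 1" by (rule G4_edge1(2)) (use n5 in auto)
      ultimately have "R 2 1" unfolding R_def by (simp only: one_add_one)
      then show ?thesis using True b2 by (metis r_into_rtranclp)
    next
      case v1: False
      have vv: "v \<ge> 2" "v \<le> n" using v sub v1 by auto
      obtain w where w: "v = w + 1" using vv(1) by (cases v) auto
      have bb: "b = 1 \<or> b = 2" using b by auto
      have wp1: "w mod 2 = b mod 2" using False w bb by presburger
      have wp2: "w \<ge> b" using False w bb vv by presburger
      have "2 dvd w - b" using wp1 wp2 mod_eq_dvd_iff_nat by blast
      then obtain t where "w - b = 2 * t" by (elim dvdE)
      then have t: "w = b + 2 * t" using wp2 by simp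
      have wn: "w + 1 \<le> n" "w \<ge> 1" using vv w wp2 bb by auto
      have "R\<^sup>*\<^sup>* b w" using chain[of t] wn t by simp
      moreover have "w \<in> S" using sup wp1 wn by auto
      moreover have "R w v" unfolding R_def using G4_edge1(1)[of n w] n5 wn w v \<open>w \<in> S\<close> by simp
      ultimately show ?thesis by (auto intro: rtranclp.rtrancl_into_rtrancl)
    qed
  qed
  show ?thesis unfolding induces_connected_def R_def[symmetric]
  proof (intro ballI)
    fix u v assume "u \<in> S" "v \<in> S"
    show "R\<^sup>*\<^sup>* u v" by (rule rtranclp_trans[OF symRR[OF reach[OF \<open>u \<in> S\<close>]] reach[OF \<open>v \<in> S\<close>]])
  qed
qed

lemma sum_even:
  fixes F :: "nat \<Rightarrow> real"
  shows "(\<Sum>j=1..2*q. F j) = (\<Sum>t=1..q. F (2*t-1)) + (\<Sum>t=1..q. F (2*t))"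
proof (induction q)
  case 0 then show ?case by simp
next
  case (Suc q)
  have e: "2 * Suc q = Suc (Suc (2*q))" "2 * Suc q - 1 = Suc (2*q)" by simp_all
  have "(\<Sum>j=1..2*Suc q. F j) = (\<Sum>j=1..2*q. F j) + F (Suc (2*q)) + F (Suc (Suc (2*q)))"
    unfolding e by simp
  also have "\<dots> = (\<Sum>t=1..Suc q. F (2*t-1)) + (\<Sum>t=1..Suc q. F (2*t))"
    unfolding Suc.IH using e by simp
  finally show ?case .
qed

lemma sum_split:
  fixes F :: "nat \<Rightarrow> real"
  shows "(\<Sum>j=1..n. F j) = (\<Sum>t=1..(n+1) div 2. F (2*t-1)) + (\<Sum>t=1..n div 2. F (2*t))"
proof (cases "even n")
  case True
  then obtain q where q: "n = 2*q" by blast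
  have "(n+1) div 2 = q" "n div 2 = q" using q by auto
  then show ?thesis using q sum_even by simp
next
  case False
  then obtain q where q: "n = Suc (2*q)" by (metis oddE Suc_eq_plus1)
  have a: "(n+1) div 2 = Suc q" "n div 2 = q" using q by auto
  have "(\<Sum>j=1..n. F j) = (\<Sum>j=1..2*q. F j) + F (Suc (2*q))" using q by simp
  also have "\<dots> = (\<Sum>t=1..Suc q. F (2*t-1)) + (\<Sum>t=1..q. F (2*t))"
    unfolding sum_even by simp
  finally show ?thesis unfolding a .
qed

lemma exC: "\<exists>m A. zero_one_matrix m N A \<and> identifies k m N A"
proof -
  define A :: "nat \<Rightarrow> nat \<Rightarrow> real" where "A = (\<lambda>i j. if j = i + 1 then 1 else 0)"
  have z: "zero_one_matrix N N A" unfolding zero_one_matrix_def A_def by auto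
  have mv: "mat_vec N A x i = x (i+1)" if "i < N" for x i
  proof -
    have "mat_vec N A x i = (\<Sum>j\<in>{1..N}. if j = i + 1 then x j else 0)"
      unfolding mat_vec_def A_def by (intro sum.cong) auto
    also have "\<dots> = x (i+1)" using that by (subst sum.delta) auto
    finally show ?thesis .
  qed
  have "identifies k N N A" unfolding identifies_def
  proof (intro allI impI)
    fix x1 x2 assume s1: "sparse_vec k N x1" and s2: "sparse_vec k N x2" and ne: "x1 \<noteq> x2"
    have "\<exists>j. x1 j \<noteq> x2 j" using ne by (simp add: fun_eq_iff)
    then obtain j where j: "x1 j \<noteq> x2 j" by blast
    have jr: "j \<in> {1..N}"
    proof (rule ccontr)
      assume "j \<notin> {1..N}"
      then have "x1 j = 0" "x2 j = 0" using s1 s2 by (simp_all add: sparse_vec_def)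
      with j show False by simp
    qed
    show "\<exists>i<N. mat_vec N A x1 i \<noteq> mat_vec N A x2 i"
      using jr j mv[of "j - 1"] by (intro exI[of _ "j - 1"]) auto
  qed
  with z show ?thesis by blast
qed


lemma odd_idx:
  fixes j n :: nat
  assumes "j \<in> {1..n}" "odd j"
  shows "(j+1) div 2 \<in> {1..(n+1) div 2}" "2 * ((j+1) div 2) - 1 = j"
  using assms by (auto elim!: oddE)

lemma even_idx:
  fixes j n :: nat
  assumes "j \<in> {1..n}" "even j"
  shows "j div 2 \<in> {1..n div 2}" "2 * (j div 2) = j"
  using assms by (auto elim!: evenE)

lemma card_sub:
  fixes x :: "nat \<Rightarrow> real" and f :: "nat \<Rightarrow> nat"
  assumes inj: "inj_on f {1..N}" and rng: "\<And>t. t \<in> {1..N} \<Longrightarrow> f t \<in> {1..n}"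
    and sp: "sparse_vec k n x"
  shows "sparse_vec k N (\<lambda>t. if t \<in> {1..N} then x (f t) else 0)"
proof -
  have "card {t\<in>{1..N}. (if t \<in> {1..N} then x (f t) else 0) \<noteq> 0} \<le> card {j\<in>{1..n}. x j \<noteq> 0}"
  proof (rule card_inj_on_le[where f = f])
    show "inj_on f {t\<in>{1..N}. (if t \<in> {1..N} then x (f t) else 0) \<noteq> 0}"
      using inj by (rule inj_on_subset) auto
    show "f ` {t\<in>{1..N}. (if t \<in> {1..N} then x (f t) else 0) \<noteq> 0} \<subseteq> {j\<in>{1..n}. x j \<noteq> 0}"
      using rng by auto
  qed auto
  then show ?thesis using sp unfolding sparse_vec_def by auto
qed

theorem theorem2:
  fixes n k :: nat
  assumes "n \<ge> 5" and "k \<ge> 1"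
  shows "M_graph (G4 n) k n \<le> M_C k (n div 2) + M_C k ((n + 1) div 2) + 2"
proof -
  note n5 = assms(1)
  define N1 where "N1 = (n+1) div 2"
  define N2 where "N2 = n div 2"
  define m1 where "m1 = M_C k N1"
  define m2 where "m2 = M_C k N2"
  have "\<exists>A. zero_one_matrix m1 N1 A \<and> identifies k m1 N1 A"
    unfolding m1_def M_C_def by (rule LeastI_ex) (rule exC)
  then obtain B1 where B1z: "zero_one_matrix m1 N1 B1" and B1i: "identifies k m1 N1 B1" by blast
  have "\<exists>A. zero_one_matrix m2 N2 A \<and> identifies k m2 N2 A"
    unfolding m2_def M_C_def by (rule LeastI_ex) (rule exC)
  then obtain B2 where B2z: "zero_one_matrix m2 N2 B2" and B2i: "identifies k m2 N2 B2" by blast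
  define A :: "nat \<Rightarrow> nat \<Rightarrow> real" where "A = (\<lambda>i j.
     if i < m1 then (if odd j then B1 i ((j+1) div 2) else 1)
     else if i < m1 + m2 then (if even j then B2 (i - m1) (j div 2) else 1)
     else if i = m1 + m2 then (if even j then 1 else 0)
     else (if odd j then 1 else 0))"
  define m where "m = m1 + m2 + 2"
  have zo: "zero_one_matrix m n A" unfolding zero_one_matrix_def
  proof (intro allI impI ballI)
    fix i j assume i: "i < m" and j: "j \<in> {1..n}"
    show "A i j = 0 \<or> A i j = 1"
    proof (cases "i < m1")
      case True
      then show ?thesis using B1z odd_idx(1)[OF j] unfolding zero_one_matrix_def A_def N1_def by auto
    next
      case f1: False
      show ?thesis
      proof (cases "i < m1 + m2")
        case True
        then have "i - m1 < m2" using f1 by simp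
        then show ?thesis using True f1 B2z even_idx(1)[OF j] unfolding zero_one_matrix_def A_def N2_def by auto
      next
        case False then show ?thesis using f1 unfolding A_def by auto
      qed
    qed
  qed
  have conn_rows: "induces_connected (G4 n) (row_support n A i)" if i: "i < m" for i
  proof -
    have sub: "row_support n A i \<subseteq> {1..n}" unfolding row_support_def by auto
    have "\<exists>b\<in>{1,2::nat}. \<forall>j\<in>{1..n}. j mod 2 = b mod 2 \<longrightarrow> j \<in> row_support n A i"
    proof (cases "i < m1 \<or> i = m1 + m2")
      case True
      then have "\<forall>j\<in>{1..n}. j mod 2 = 2 mod 2 \<longrightarrow> j \<in> row_support n A i"
        unfolding row_support_def A_def by (auto simp: odd_iff_mod_2_eq_one)
      then show ?thesis by blast
    next
      case False
      then have "\<forall>j\<in>{1..n}. j mod 2 = 1 mod 2 \<longrightarrow> j \<in> row_support n A i"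
        unfolding row_support_def A_def by (auto simp: odd_iff_mod_2_eq_one)
      then show ?thesis by blast
    qed
    then obtain b where "b \<in> {1,2::nat}" "\<forall>j\<in>{1..n}. j mod 2 = b mod 2 \<longrightarrow> j \<in> row_support n A i"
      by blast
    then show ?thesis using conn[OF n5 _ sub] by blast
  qed
  have mm: "measurement_matrix (G4 n) m n A"
    unfolding measurement_matrix_def using zo conn_rows by blast
  define xo where "xo = (\<lambda>x::nat\<Rightarrow>real. \<lambda>t. if t \<in> {1..N1} then x (2*t-1) else 0)"
  define xe where "xe = (\<lambda>x::nat\<Rightarrow>real. \<lambda>t. if t \<in> {1..N2} then x (2*t) else 0)"
  define SO where "SO = (\<lambda>x::nat\<Rightarrow>real. \<Sum>t=1..N1. x (2*t-1))"
  define SE where "SE = (\<lambda>x::nat\<Rightarrow>real. \<Sum>t=1..N2. x (2*t))"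
  have splitA: "mat_vec n A x i = (\<Sum>t=1..N1. A i (2*t-1) * x (2*t-1)) + (\<Sum>t=1..N2. A i (2*t) * x (2*t))"
    for x i unfolding mat_vec_def N1_def N2_def by (rule sum_split)
  have oddt: "odd (2*t-1)" "(2*t-1+1) div 2 = t" if "t \<in> {1..N1}" for t :: nat
    using that by auto
  have r1: "mat_vec n A x i = mat_vec N1 B1 (xo x) i + SE x" if "i < m1" for x i
  proof -
    have "(\<Sum>t=1..N1. A i (2*t-1) * x (2*t-1)) = (\<Sum>t=1..N1. B1 i t * xo x t)"
      using that oddt by (intro sum.cong) (auto simp: A_def xo_def)
    moreover have "(\<Sum>t=1..N2. A i (2*t) * x (2*t)) = SE x"
      using that unfolding SE_def by (intro sum.cong) (auto simp: A_def)
    ultimately show ?thesis by (subst splitA) (simp add: mat_vec_def)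
  qed
  have r2: "mat_vec n A x i = mat_vec N2 B2 (xe x) (i - m1) + SO x" if "m1 \<le> i" "i < m1 + m2" for x i
  proof -
    have "(\<Sum>t=1..N2. A i (2*t) * x (2*t)) = (\<Sum>t=1..N2. B2 (i - m1) t * xe x t)"
      using that by (intro sum.cong) (auto simp: A_def xe_def)
    moreover have "(\<Sum>t=1..N1. A i (2*t-1) * x (2*t-1)) = SO x"
      using that oddt unfolding SO_def by (intro sum.cong) (auto simp: A_def)
    ultimately show ?thesis by (subst splitA) (simp add: mat_vec_def)
  qed
  have r3: "mat_vec n A x (m1 + m2) = SE x" for x
  proof -
    have "(\<Sum>t=1..N2. A (m1+m2) (2*t) * x (2*t)) = SE x"
      unfolding SE_def by (intro sum.cong) (auto simp: A_def)
    moreover have "(\<Sum>t=1..N1. A (m1+m2) (2*t-1) * x (2*t-1)) = 0"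
      using oddt by (intro sum.neutral) (auto simp: A_def)
    ultimately show ?thesis unfolding splitA by simp
  qed
  have r4: "mat_vec n A x (m1 + m2 + 1) = SO x" for x
  proof -
    have "(\<Sum>t=1..N2. A (m1+m2+1) (2*t) * x (2*t)) = 0"
      by (intro sum.neutral) (auto simp: A_def)
    moreover have "(\<Sum>t=1..N1. A (m1+m2+1) (2*t-1) * x (2*t-1)) = SO x"
      using oddt unfolding SO_def by (intro sum.cong) (auto simp: A_def)
    ultimately show ?thesis unfolding splitA by simp
  qed
  have spo: "sparse_vec k N1 (xo x)" if "sparse_vec k n x" for x
    unfolding xo_def
  proof (rule card_sub[OF _ _ that])
    show "inj_on (\<lambda>t. 2*t-1) {1..N1}" by (auto simp: inj_on_def)
    show "\<And>t. t \<in> {1..N1} \<Longrightarrow> 2*t-1 \<in> {1..n}" unfolding N1_def by auto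
  qed
  have spe: "sparse_vec k N2 (xe x)" if "sparse_vec k n x" for x
    unfolding xe_def
  proof (rule card_sub[OF _ _ that])
    show "inj_on (\<lambda>t. 2*t) {1..N2}" by (auto simp: inj_on_def)
    show "\<And>t. t \<in> {1..N2} \<Longrightarrow> 2*t \<in> {1..n}" unfolding N2_def by auto
  qed
  have idf: "identifies k m n A" unfolding identifies_def
  proof (intro allI impI)
    fix x1 x2 assume s1: "sparse_vec k n x1" and s2: "sparse_vec k n x2" and ne: "x1 \<noteq> x2"
    have "\<exists>j. x1 j \<noteq> x2 j" using ne by (simp add: fun_eq_iff)
    then obtain j where j: "x1 j \<noteq> x2 j" by blast
    have jr: "j \<in> {1..n}"
    proof (rule ccontr)
      assume "j \<notin> {1..n}"
      then have "x1 j = 0" "x2 j = 0" using s1 s2 by (simp_all add: sparse_vec_def)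
      with j show False by simp
    qed
    show "\<exists>i<m. mat_vec n A x1 i \<noteq> mat_vec n A x2 i"
    proof (rule ccontr)
      assume "\<not> ?thesis"
      then have eq: "\<And>i. i < m \<Longrightarrow> mat_vec n A x1 i = mat_vec n A x2 i" by blast
      have eSE: "SE x1 = SE x2" using eq[of "m1+m2"] r3 unfolding m_def by simp
      have eSO: "SO x1 = SO x2" using eq[of "m1+m2+1"] r4 unfolding m_def by simp
      show False
      proof (cases "odd j")
        case True
        define t where "t = (j+1) div 2"
        have t: "t \<in> {1..N1}" "2*t-1 = j" using odd_idx[OF jr True] unfolding t_def N1_def by auto
        have "xo x1 t \<noteq> xo x2 t" using t j unfolding xo_def by simp
        then have "xo x1 \<noteq> xo x2" by metis
        then obtain i where i: "i < m1" "mat_vec N1 B1 (xo x1) i \<noteq> mat_vec N1 B1 (xo x2) i"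
          using B1i spo[OF s1] spo[OF s2] unfolding identifies_def by blast
        have "mat_vec n A x1 i = mat_vec n A x2 i" using eq[of i] i(1) unfolding m_def by simp
        then show False using r1[OF i(1), of x1] r1[OF i(1), of x2] eSE i(2) by simp
      next
        case False
        define t where "t = j div 2"
        have t: "t \<in> {1..N2}" "2*t = j" using even_idx[OF jr] False unfolding t_def N2_def by auto
        have "xe x1 t \<noteq> xe x2 t" using t j unfolding xe_def by simp
        then have "xe x1 \<noteq> xe x2" by metis
        then obtain i where i: "i < m2" "mat_vec N2 B2 (xe x1) i \<noteq> mat_vec N2 B2 (xe x2) i"
          using B2i spe[OF s1] spe[OF s2] unfolding identifies_def by blast
        have le: "m1 \<le> i + m1" "i + m1 < m1 + m2" using i(1) by auto
        have "mat_vec n A x1 (i + m1) = mat_vec n A x2 (i + m1)" using eq[of "i+m1"] i(1) unfolding m_def by simp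
        then show False using r2[OF le, of x1] r2[OF le, of x2] eSO i(2) by simp
      qed
    qed
  qed
  have "M_graph (G4 n) k n \<le> m"
    unfolding M_graph_def using mm idf by (intro Least_le) blast
  then show ?thesis unfolding m_def m1_def m2_def N1_def N2_def by simp
qed

end
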